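(* Let $x_0 \in \mathbb R^{n_x}$ and $u_0 \in \mathbb R^{n_u} \times \{0,1\}^{m_u}$ with $(x_0,u_0) \in \mathcal D$, let $v_0 := V u_0$, let $e_0 \in \mathbb R^{n_x}$, and let $x_1 := A x_0 + B u_0 + e_0$. Let $\mathcal V_0 = [(\underline v_{t|0})_{t=0}^{T-1}, (\bar v_{t|0})_{t=0}^{T-1}]$ be an interval with $\underline v_{0|0} \le v_0 \le \bar v_{0|0}$, and let $\mathcal V_1 := [(\underline v_{1|0}, \ldots, \underline v_{T-1|0}, 0), (\bar v_{1|0}, \ldots, \bar v_{T-1|0}, 1)]$ (with $0,1 \in \mathbb R^{m_u}$ the all-zero and all-one vectors). Let $\{\lambda_{t|0}, \rho_{t|0}\}_{t=0}^{T}$ and $\{\mu_{t|0}, \underline\nu_{t|0}, \bar\nu_{t|0}, \sigma_{t|0}\}_{t=0}^{T-1}$ be feasible multipliers for $\mathbf D(\mathcal V_0; x_0)$ with dual objective value $\underline\theta_0(\mathcal V_0)$. Define $$\pi_1 := -|Q x_0|^2 - |R u_0|^2,\qquad \pi_2 := |\rho_{0|0}/2 - Q x_0|^2 + |\sigma_{0|0}/2 - R u_0|^2,$$ $$\pi_3 := (h - F x_0 - G u_0)'\mu_{0|0} + (v_0 - \underline v_{0|0})'\underline\nu_{0|0} + (\bar v_{0|0} - v_0)'\bar\nu_{0|0},\qquad \pi_4 := -e_0'\lambda_{1|0}.$$ Then $\underline\theta_1(\mathcal V_1) := \underline\theta_0(\mathcal V_0) + \sum_{i=1}^4 \pi_i$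 is a lower bound on $\theta(\mathcal V_1; x_1)$, the optimal value of $\mathbf P(\mathcal V_1; x_1)$.
   Context: Fix integers $n_x, n_u, m_u \ge 0$ and $T \ge 1$. Let $A \in \mathbb R^{n_x \times n_x}$, $B \in \mathbb R^{n_x \times (n_u+m_u)}$, and let $F, G, h$ define the polyhedron $\mathcal D = \{(x,u) \in \mathbb R^{n_x} \times \mathbb R^{n_u+m_u} : F x + G u \le h\}$, assumed to contain the origin. Input vectors $u \in \mathbb R^{n_u+m_u}$ have $n_u$ continuous entries and $m_u$ entries intended to be binary; $V \in \mathbb R^{m_u \times (n_u+m_u)}$ is the selection matrix extracting the latter. Let $Q$ (with $n_x$ columns) and $R$ (with $n_u+m_u$ columns) be weight matrices, possibly rank deficient. An interval is a set $\mathcal V = [(\underline v_t)_{t=0}^{T-1}, (\bar v_t)_{t=0}^{T-1}] \subset \mathbb R^{T m_u}$ with $\underline v_t, \bar v_t \in \{0,1\}^{m_u}$, $\underline v_t \le \bar v_t$. For an interval $\mathcal V$ and $\xi \in \mathbb R^{n_x}$, the QP $\mathbf P(\mathcal V; \xi)$ is: minimize $\sum_{t=0}^T |Q x_t|^2 + \sum_{t=0}^{T-1} |R u_t|^2$ over $x_0,\ldots,x_T \in \mathbb R^{n_x}$, $u_0, \ldots, u_{T-1} \in \mathbb R^{n_u+m_u}$ subject to $x_0 = \xi$, $x_{t+1} = A x_t + B u_t$, $(x_t, u_t) \in \mathcal D$, $\underline v_t \le V u_t \le \bar v_t$ ($t = 0, \ldots, T-1$); its optimal value is $\theta(\mathcal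 V;\xi) \in \mathbb R_{\ge 0} \cup \{\infty\}$ ($\infty$ if infeasible). Its dual $\mathbf D(\mathcal V; \xi)$ is: maximize $$-\sum_{t=0}^{T} |\rho_t/2|^2 - \sum_{t=0}^{T-1}\big(|\sigma_t/2|^2 + h'\mu_t + \bar v_t'\bar\nu_t - \underline v_t'\underline\nu_t\big) - \xi'\lambda_0$$ over $\{\lambda_t, \rho_t\}_{t=0}^T$, $\{\mu_t, \underline\nu_t, \bar\nu_t, \sigma_t\}_{t=0}^{T-1}$ subject to: $Q'\rho_t + \lambda_t - A'\lambda_{t+1} + F'\mu_t = 0$ ($t=0,\ldots,T-1$); $Q'\rho_T + \lambda_T = 0$; $R'\sigma_t - B'\lambda_{t+1} + G'\mu_t + V'(\bar\nu_t - \underline\nu_t) = 0$ ($t = 0, \ldots, T-1$); $(\mu_t, \underline\nu_t, \bar\nu_t) \ge 0$. The dual objective value of a feasible point is the value of this objective at it. $|\cdot|$ is the Euclidean norm, $'$ the transpose. *)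

theory Defs
  imports "Jordan_Normal_Form.Matrix" "HOL-Library.Extended_Real"
begin

definition sqnorm :: "real vec \<Rightarrow> real" where
  "sqnorm v = v \<bullet> v"

definition sel_mat :: "nat \<Rightarrow> nat \<Rightarrow> real mat" where
  "sel_mat nu mu = mat mu (nu + mu) (\<lambda>(i, j). if j = nu + i then 1 else 0)"

definition is_interval :: "nat \<Rightarrow> nat \<Rightarrow> (nat \<Rightarrow> real vec) \<Rightarrow> (nat \<Rightarrow> real vec) \<Rightarrow> bool" where
  "is_interval m T vlo vhi \<longleftrightarrow>
     (\<forall>t<T. vlo t \<in> carrier_vec m \<and> vhi t \<in> carrier_vec m \<and>
            (\<forall>i<m. vlo t $ i \<in> {0, 1} \<and> vhi t $ i \<in> {0, 1}) \<and> vlo t \<le> vhi t)"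

definition primal_feasible ::
  "real mat \<Rightarrow> real mat \<Rightarrow> real mat \<Rightarrow> real mat \<Rightarrow> real vec \<Rightarrow> real mat \<Rightarrow> nat \<Rightarrow>
   (nat \<Rightarrow> real vec) \<Rightarrow> (nat \<Rightarrow> real vec) \<Rightarrow> real vec \<Rightarrow>
   (nat \<Rightarrow> real vec) \<Rightarrow> (nat \<Rightarrow> real vec) \<Rightarrow> bool" where
  "primal_feasible A B F G h V T vlo vhi \<xi> xs us \<longleftrightarrow>
     xs 0 = \<xi> \<and>
     (\<forall>t\<le>T. xs t \<in> carrier_vec (dim_col A)) \<and>
     (\<forall>t<T. us t \<in> carrier_vec (dim_col B)) \<and>
     (\<forall>t<T. xs (t + 1) = A *\<^sub>v xs t + B *\<^sub>v us t) \<and>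
     (\<forall>t<T. F *\<^sub>v xs t + G *\<^sub>v us t \<le> h) \<and>
     (\<forall>t<T. vlo t \<le> V *\<^sub>v us t \<and> V *\<^sub>v us t \<le> vhi t)"

definition primal_cost :: "real mat \<Rightarrow> real mat \<Rightarrow> nat \<Rightarrow>
   (nat \<Rightarrow> real vec) \<Rightarrow> (nat \<Rightarrow> real vec) \<Rightarrow> real" where
  "primal_cost Q R T xs us =
     (\<Sum>t\<le>T. sqnorm (Q *\<^sub>v xs t)) + (\<Sum>t<T. sqnorm (R *\<^sub>v us t))"

text \<open>Optimal value theta(V; xi) of P(V; xi); it is \<infinity> if the QP is infeasible.\<close>
definition theta ::
  "real mat \<Rightarrow> real mat \<Rightarrow> real mat \<Rightarrow> real mat \<Rightarrow> real vec \<Rightarrow> real mat \<Rightarrow>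
   real mat \<Rightarrow> real mat \<Rightarrow> nat \<Rightarrow>
   (nat \<Rightarrow> real vec) \<Rightarrow> (nat \<Rightarrow> real vec) \<Rightarrow> real vec \<Rightarrow> ereal" where
  "theta A B F G h V Q R T vlo vhi \<xi> =
     Inf {ereal (primal_cost Q R T xs us) | xs us. primal_feasible A B F G h V T vlo vhi \<xi> xs us}"

definition dual_feasible ::
  "real mat \<Rightarrow> real mat \<Rightarrow> real mat \<Rightarrow> real mat \<Rightarrow> real mat \<Rightarrow> real mat \<Rightarrow> real mat \<Rightarrow> nat \<Rightarrow>
   (nat \<Rightarrow> real vec) \<Rightarrow> (nat \<Rightarrow> real vec) \<Rightarrow> (nat \<Rightarrow> real vec) \<Rightarrow>
   (nat \<Rightarrow> real vec) \<Rightarrow> (nat \<Rightarrow> real vec) \<Rightarrow> (nat \<Rightarrow> real vec) \<Rightarrow> bool" where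
  "dual_feasible A B F G V Q R T lam rho mu nlo nhi sig \<longleftrightarrow>
     (\<forall>t\<le>T. lam t \<in> carrier_vec (dim_col A) \<and> rho t \<in> carrier_vec (dim_row Q)) \<and>
     (\<forall>t<T. mu t \<in> carrier_vec (dim_row F) \<and> nlo t \<in> carrier_vec (dim_row V) \<and>
            nhi t \<in> carrier_vec (dim_row V) \<and> sig t \<in> carrier_vec (dim_row R)) \<and>
     (\<forall>t<T. transpose_mat Q *\<^sub>v rho t + lam t - transpose_mat A *\<^sub>v lam (t + 1)
             + transpose_mat F *\<^sub>v mu t = 0\<^sub>v (dim_col A)) \<and>
     transpose_mat Q *\<^sub>v rho T + lam T = 0\<^sub>v (dim_col A) \<and>
     (\<forall>t<T. transpose_mat R *\<^sub>v sig t - transpose_mat B *\<^sub>v lam (t + 1)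
             + transpose_mat G *\<^sub>v mu t + transpose_mat V *\<^sub>v (nhi t - nlo t)
             = 0\<^sub>v (dim_col B)) \<and>
     (\<forall>t<T. mu t \<ge> 0\<^sub>v (dim_row F) \<and> nlo t \<ge> 0\<^sub>v (dim_row V) \<and> nhi t \<ge> 0\<^sub>v (dim_row V))"

definition dual_obj ::
  "real vec \<Rightarrow> nat \<Rightarrow> (nat \<Rightarrow> real vec) \<Rightarrow> (nat \<Rightarrow> real vec) \<Rightarrow> real vec \<Rightarrow>
   (nat \<Rightarrow> real vec) \<Rightarrow> (nat \<Rightarrow> real vec) \<Rightarrow> (nat \<Rightarrow> real vec) \<Rightarrow>
   (nat \<Rightarrow> real vec) \<Rightarrow> (nat \<Rightarrow> real vec) \<Rightarrow> (nat \<Rightarrow> real vec) \<Rightarrow> real" where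
  "dual_obj h T vlo vhi \<xi> lam rho mu nlo nhi sig =
     - (\<Sum>t\<le>T. sqnorm ((1/2) \<cdot>\<^sub>v rho t))
     - (\<Sum>t<T. sqnorm ((1/2) \<cdot>\<^sub>v sig t) + h \<bullet> mu t + vhi t \<bullet> nhi t - vlo t \<bullet> nlo t)
     - \<xi> \<bullet> lam 0"

end

theory Submission
  imports Defs
begin

lemma comp_eq:
  fixes a b c d :: "real vec"
  assumes "a \<in> carrier_vec n" "b \<in> carrier_vec n" "c \<in> carrier_vec n" "d \<in> carrier_vec n"
    and "a + b - c + d = 0\<^sub>v n"
  shows "\<forall>i<n. a $ i + d $ i = c $ i - b $ i"
proof (intro allI impI)
  fix i assume i: "i < n"
  have "(a + b - c + d) $ i = 0" using assms(5) i by simp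
  moreover have "(a + b - c + d) $ i = a$i + b$i - c$i + d$i" using assms(1-4) i by simp
  ultimately show "a $ i + d $ i = c $ i - b $ i" by linarith
qed

lemma sum_part:
  fixes a d c b x :: "real vec"
  assumes "a \<in> carrier_vec n" "b \<in> carrier_vec n" "c \<in> carrier_vec n" "d \<in> carrier_vec n"
     "x \<in> carrier_vec n"
    and "\<forall>i<n. a $ i + d $ i = c $ i - b $ i"
  shows "a \<bullet> x + d \<bullet> x = c \<bullet> x - b \<bullet> x"
proof -
  have "a \<bullet> x + d \<bullet> x = (\<Sum>i\<in>{0..<n}. (a $ i + d $ i) * x $ i)"
    using assms unfolding scalar_prod_def by (simp add: sum.distrib[symmetric] algebra_simps)
  also have "\<dots> = (\<Sum>i\<in>{0..<n}. (c $ i - b $ i) * x $ i)"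
    using assms(6) by (intro sum.cong) auto
  also have "\<dots> = c \<bullet> x - b \<bullet> x"
    using assms unfolding scalar_prod_def by (simp add: sum_subtractf[symmetric] algebra_simps)
  finally show ?thesis .
qed

lemma mz[simp]:
  fixes M :: "real mat"
  assumes "M \<in> carrier_mat n k"
  shows "M *\<^sub>v 0\<^sub>v k = 0\<^sub>v n"
  by (rule eq_vecI) (use assms in \<open>auto simp: mult_mat_vec_def\<close>)

lemma tr: 
  fixes M :: "real mat"
  assumes "M \<in> carrier_mat k n" "x \<in> carrier_vec n" "y \<in> carrier_vec k"
  shows "y \<bullet> (M *\<^sub>v x) = (transpose_mat M *\<^sub>v y) \<bullet> x"
  using transpose_vec_mult_scalar[OF assms] by simp

lemma stage_identity:
  fixes A B F G Q R V :: "real mat" and x u lam lam' rho sig mu nlo nhi :: "real vec"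
  assumes A: "A \<in> carrier_mat nx nx" and B: "B \<in> carrier_mat nx m"
    and F: "F \<in> carrier_mat p nx" and G: "G \<in> carrier_mat p m"
    and Q: "Q \<in> carrier_mat q nx" and R: "R \<in> carrier_mat r m" and V: "V \<in> carrier_mat k m"
    and x: "x \<in> carrier_vec nx" and u: "u \<in> carrier_vec m"
    and lam: "lam \<in> carrier_vec nx" and lam': "lam' \<in> carrier_vec nx"
    and rho: "rho \<in> carrier_vec q" and sig: "sig \<in> carrier_vec r"
    and mu: "mu \<in> carrier_vec p" and nlo: "nlo \<in> carrier_vec k" and nhi: "nhi \<in> carrier_vec k"
    and c1: "transpose_mat Q *\<^sub>v rho + lam - transpose_mat A *\<^sub>v lam' + transpose_mat F *\<^sub>v mu = 0\<^sub>v nx"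
    and c2: "transpose_mat R *\<^sub>v sig - transpose_mat B *\<^sub>v lam' + transpose_mat G *\<^sub>v mu
             + transpose_mat V *\<^sub>v (nhi - nlo) = 0\<^sub>v m"
  shows "rho \<bullet> (Q *\<^sub>v x) + sig \<bullet> (R *\<^sub>v u) + mu \<bullet> (F *\<^sub>v x + G *\<^sub>v u)
         + (nhi - nlo) \<bullet> (V *\<^sub>v u) = (A *\<^sub>v x + B *\<^sub>v u) \<bullet> lam' - x \<bullet> lam"
proof -
  have n1: "\<forall>i<nx. (transpose_mat Q *\<^sub>v rho) $ i + (transpose_mat F *\<^sub>v mu) $ i
      = (transpose_mat A *\<^sub>v lam') $ i - lam $ i"
    by (rule comp_eq[OF _ _ _ _ c1]) (use A F Q rho lam lam' mu in auto)
  have n2: "\<forall>i<m. (transpose_mat R *\<^sub>v sig) $ i + (transpose_mat G *\<^sub>v mu + transpose_mat V *\<^sub>v (nhi - nlo)) $ i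
      = (transpose_mat B *\<^sub>v lam') $ i - 0\<^sub>v m $ i"
  proof (intro allI impI)
    fix i assume i: "i < m"
    have "(transpose_mat R *\<^sub>v sig - transpose_mat B *\<^sub>v lam' + transpose_mat G *\<^sub>v mu
             + transpose_mat V *\<^sub>v (nhi - nlo)) $ i = 0" using c2 i by simp
    then show "(transpose_mat R *\<^sub>v sig) $ i + (transpose_mat G *\<^sub>v mu + transpose_mat V *\<^sub>v (nhi - nlo)) $ i
      = (transpose_mat B *\<^sub>v lam') $ i - 0\<^sub>v m $ i"
      using i B G R V sig lam' mu nlo nhi by simp
  qed
  have sx: "(transpose_mat Q *\<^sub>v rho) \<bullet> x + (transpose_mat F *\<^sub>v mu) \<bullet> x
      = (transpose_mat A *\<^sub>v lam') \<bullet> x - lam \<bullet> x"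
    by (rule sum_part[OF _ _ _ _ x n1]) (use A F Q rho lam lam' mu in auto)
  have su: "(transpose_mat R *\<^sub>v sig) \<bullet> u + (transpose_mat G *\<^sub>v mu + transpose_mat V *\<^sub>v (nhi - nlo)) \<bullet> u
      = (transpose_mat B *\<^sub>v lam') \<bullet> u - 0\<^sub>v m \<bullet> u"
    by (rule sum_part[OF _ _ _ _ u n2]) (use B G R V sig lam' mu nlo nhi in auto)
  have e1: "rho \<bullet> (Q *\<^sub>v x) = (transpose_mat Q *\<^sub>v rho) \<bullet> x" using tr[OF Q x rho] .
  have e2: "sig \<bullet> (R *\<^sub>v u) = (transpose_mat R *\<^sub>v sig) \<bullet> u" using tr[OF R u sig] .
  have e3: "mu \<bullet> (F *\<^sub>v x + G *\<^sub>v u) = (transpose_mat F *\<^sub>v mu) \<bullet> x + (transpose_mat G *\<^sub>v mu) \<bullet> u"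
    using scalar_prod_add_distrib[OF mu, of "F *\<^sub>v x" "G *\<^sub>v u"] F G x u tr[OF F x mu] tr[OF G u mu] by simp
  have e4: "(nhi - nlo) \<bullet> (V *\<^sub>v u) = (transpose_mat V *\<^sub>v (nhi - nlo)) \<bullet> u"
    using tr[OF V u, of "nhi - nlo"] nhi nlo by simp
  have e5: "(A *\<^sub>v x + B *\<^sub>v u) \<bullet> lam' = (transpose_mat A *\<^sub>v lam') \<bullet> x + (transpose_mat B *\<^sub>v lam') \<bullet> u"
    using add_scalar_prod_distrib[of "A *\<^sub>v x" nx "B *\<^sub>v u" lam'] A B x u lam'
      tr[OF A x lam'] tr[OF B u lam'] comm_scalar_prod[of "A *\<^sub>v x" nx lam'] comm_scalar_prod[of "B *\<^sub>v u" nx lam'] by simp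
  have e6: "(transpose_mat G *\<^sub>v mu + transpose_mat V *\<^sub>v (nhi - nlo)) \<bullet> u
     = (transpose_mat G *\<^sub>v mu) \<bullet> u + (transpose_mat V *\<^sub>v (nhi - nlo)) \<bullet> u"
    by (rule add_scalar_prod_distrib) (use G V mu nhi nlo u in auto)
  have e7: "x \<bullet> lam = lam \<bullet> x" using comm_scalar_prod[OF x lam] .
  show ?thesis using sx su e1 e2 e3 e4 e5 e6 e7 u by simp
qed

lemma sq_ineq:
  fixes y z :: "real vec"
  assumes "y \<in> carrier_vec n" "z \<in> carrier_vec n"
  shows "z \<bullet> y \<le> sqnorm y + sqnorm ((1/2) \<cdot>\<^sub>v z)"
proof -
  have "z \<bullet> y = (\<Sum>i\<in>{0..<n}. z $ i * y $ i)" using assms unfolding scalar_prod_def by simp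
  also have "\<dots> \<le> (\<Sum>i\<in>{0..<n}. y $ i * y $ i + (z $ i / 2) * (z $ i / 2))"
  proof (rule sum_mono)
    fix i
    have "0 \<le> (y $ i - z $ i / 2)^2" by simp
    then show "z $ i * y $ i \<le> y $ i * y $ i + (z $ i / 2) * (z $ i / 2)"
      by (simp add: power2_eq_square algebra_simps)
  qed
  also have "\<dots> = sqnorm y + sqnorm ((1/2) \<cdot>\<^sub>v z)"
    using assms unfolding sqnorm_def scalar_prod_def by (simp add: sum.distrib)
  finally show ?thesis .
qed

lemma sq_expand:
  fixes y z :: "real vec"
  assumes "y \<in> carrier_vec n" "z \<in> carrier_vec n"
  shows "sqnorm ((1/2) \<cdot>\<^sub>v z - y) = sqnorm ((1/2) \<cdot>\<^sub>v z) - z \<bullet> y + sqnorm y"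
proof -
  have "sqnorm ((1/2) \<cdot>\<^sub>v z - y) = (\<Sum>i\<in>{0..<n}. (z $ i / 2 - y $ i) * (z $ i / 2 - y $ i))"
    using assms unfolding sqnorm_def scalar_prod_def by simp
  also have "\<dots> = (\<Sum>i\<in>{0..<n}. (z $ i / 2) * (z $ i / 2) - z $ i * y $ i + y $ i * y $ i)"
    by (intro sum.cong) (auto simp: algebra_simps)
  also have "\<dots> = sqnorm ((1/2) \<cdot>\<^sub>v z) - z \<bullet> y + sqnorm y"
    using assms unfolding sqnorm_def scalar_prod_def by (simp add: sum.distrib sum_subtractf)
  finally show ?thesis .
qed

lemma le_ineq:
  fixes w h mu :: "real vec"
  assumes "w \<le> h" "0\<^sub>v (dim_vec h) \<le> mu"
  shows "w \<bullet> mu \<le> h \<bullet> mu"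
proof -
  have d: "dim_vec w = dim_vec h" "dim_vec mu = dim_vec h" using assms unfolding less_eq_vec_def by auto
  have "w \<bullet> mu = (\<Sum>i\<in>{0..<dim_vec h}. w $ i * mu $ i)" using d unfolding scalar_prod_def by simp
  also have "\<dots> \<le> (\<Sum>i\<in>{0..<dim_vec h}. h $ i * mu $ i)"
  proof (rule sum_mono)
    fix i assume i: "i \<in> {0..<dim_vec h}"
    have "w $ i \<le> h $ i" "0 \<le> mu $ i" using assms i d unfolding less_eq_vec_def by auto
    then show "w $ i * mu $ i \<le> h $ i * mu $ i" by (simp add: mult_right_mono)
  qed
  also have "\<dots> = h \<bullet> mu" using d unfolding scalar_prod_def by simp
  finally show ?thesis .
qed

lemma weak_duality:
  fixes A B F G Q R V :: "real mat" and h \<xi> :: "real vec"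
  assumes A: "A \<in> carrier_mat nx nx" and B: "B \<in> carrier_mat nx m"
    and F: "F \<in> carrier_mat p nx" and G: "G \<in> carrier_mat p m"
    and Q: "Q \<in> carrier_mat q nx" and R: "R \<in> carrier_mat r m" and V: "V \<in> carrier_mat k m"
    and h: "h \<in> carrier_vec p"
    and df: "dual_feasible A B F G V Q R T lam rho mu nlo nhi sig"
    and pf: "primal_feasible A B F G h V T vlo vhi \<xi> xs us"
  shows "dual_obj h T vlo vhi \<xi> lam rho mu nlo nhi sig \<le> primal_cost Q R T xs us"
proof -
  from A B F G Q R V have dims: "dim_col A = nx" "dim_col B = m" "dim_row F = p" "dim_row V = k"
    "dim_row Q = q" "dim_row R = r" by auto
  note df' = df[unfolded dual_feasible_def dims]
  note pf' = pf[unfolded primal_feasible_def dims]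
  define g where "g t = xs t \<bullet> lam t" for t
  define S where "S t = sqnorm (Q *\<^sub>v xs t) + sqnorm (R *\<^sub>v us t) + sqnorm ((1/2) \<cdot>\<^sub>v rho t)
     + (sqnorm ((1/2) \<cdot>\<^sub>v sig t) + h \<bullet> mu t + vhi t \<bullet> nhi t - vlo t \<bullet> nlo t)" for t
  have stage: "g (Suc t) - g t \<le> S t" if t: "t < T" for t
  proof -
    have x: "xs t \<in> carrier_vec nx" and u: "us t \<in> carrier_vec m"
      and lam: "lam t \<in> carrier_vec nx" and lam': "lam (t+1) \<in> carrier_vec nx"
      and rho: "rho t \<in> carrier_vec q" and sig: "sig t \<in> carrier_vec r"
      and mu: "mu t \<in> carrier_vec p" and nlo: "nlo t \<in> carrier_vec k" and nhi: "nhi t \<in> carrier_vec k"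
      using df' pf' t by auto
    have id: "rho t \<bullet> (Q *\<^sub>v xs t) + sig t \<bullet> (R *\<^sub>v us t) + mu t \<bullet> (F *\<^sub>v xs t + G *\<^sub>v us t)
         + (nhi t - nlo t) \<bullet> (V *\<^sub>v us t) = (A *\<^sub>v xs t + B *\<^sub>v us t) \<bullet> lam (t+1) - xs t \<bullet> lam t"
      by (rule stage_identity[OF A B F G Q R V x u lam lam' rho sig mu nlo nhi]) (use df' t in auto)
    have nx: "xs (t+1) = A *\<^sub>v xs t + B *\<^sub>v us t" using pf' t by auto
    have i1: "rho t \<bullet> (Q *\<^sub>v xs t) \<le> sqnorm (Q *\<^sub>v xs t) + sqnorm ((1/2) \<cdot>\<^sub>v rho t)"
      by (rule sq_ineq[of _ q]) (use Q x rho in auto)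
    have i2: "sig t \<bullet> (R *\<^sub>v us t) \<le> sqnorm (R *\<^sub>v us t) + sqnorm ((1/2) \<cdot>\<^sub>v sig t)"
      by (rule sq_ineq[of _ r]) (use R u sig in auto)
    have i3: "(F *\<^sub>v xs t + G *\<^sub>v us t) \<bullet> mu t \<le> h \<bullet> mu t"
      by (rule le_ineq) (use pf' df' t h in auto)
    have dv: "dim_vec (vhi t) = k" using pf' t V unfolding less_eq_vec_def by auto
    have i4: "(V *\<^sub>v us t) \<bullet> nhi t \<le> vhi t \<bullet> nhi t"
      by (rule le_ineq) (use pf' df' t nhi dv in auto)
    have i5: "vlo t \<bullet> nlo t \<le> (V *\<^sub>v us t) \<bullet> nlo t"
    proof (rule le_ineq)
      show "vlo t \<le> V *\<^sub>v us t" using pf' t by auto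
      show "0\<^sub>v (dim_vec (V *\<^sub>v us t)) \<le> nlo t" using df' t V by auto
    qed
    have c1: "mu t \<bullet> (F *\<^sub>v xs t + G *\<^sub>v us t) = (F *\<^sub>v xs t + G *\<^sub>v us t) \<bullet> mu t"
      by (rule comm_scalar_prod[of _ p]) (use F G x u mu in auto)
    have c2: "(nhi t - nlo t) \<bullet> (V *\<^sub>v us t) = (V *\<^sub>v us t) \<bullet> nhi t - (V *\<^sub>v us t) \<bullet> nlo t"
      using minus_scalar_prod_distrib[OF nhi nlo, of "V *\<^sub>v us t"] V u
        comm_scalar_prod[OF nhi, of "V *\<^sub>v us t"] comm_scalar_prod[OF nlo, of "V *\<^sub>v us t"] by simp
    show ?thesis unfolding g_def S_def using id nx i1 i2 i3 i4 i5 c1 c2 by simp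
  qed
  have trm: "- g T \<le> sqnorm (Q *\<^sub>v xs T) + sqnorm ((1/2) \<cdot>\<^sub>v rho T)"
  proof -
    have x: "xs T \<in> carrier_vec nx" and lam: "lam T \<in> carrier_vec nx" and rho: "rho T \<in> carrier_vec q"
      using df' pf' by auto
    have "(transpose_mat Q *\<^sub>v rho T + lam T) \<bullet> xs T = 0" using df' x by simp
    then have "(transpose_mat Q *\<^sub>v rho T) \<bullet> xs T + lam T \<bullet> xs T = 0"
      using add_scalar_prod_distrib[of "transpose_mat Q *\<^sub>v rho T" nx "lam T" "xs T"] Q x lam rho by simp
    moreover have "rho T \<bullet> (Q *\<^sub>v xs T) \<le> sqnorm (Q *\<^sub>v xs T) + sqnorm ((1/2) \<cdot>\<^sub>v rho T)"
      by (rule sq_ineq[of _ q]) (use Q x rho in auto)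
    moreover have "lam T \<bullet> xs T = g T" unfolding g_def using comm_scalar_prod[OF lam x] .
    ultimately show ?thesis using tr[OF Q x rho] by simp
  qed
  have "(\<Sum>t<T. g (Suc t) - g t) \<le> (\<Sum>t<T. S t)" using stage by (intro sum_mono) auto
  then have tel: "g T - g 0 \<le> (\<Sum>t<T. S t)" by (simp add: sum_lessThan_telescope)
  have g0: "g 0 = \<xi> \<bullet> lam 0" unfolding g_def using pf' by simp
  have "primal_cost Q R T xs us - dual_obj h T vlo vhi \<xi> lam rho mu nlo nhi sig
     = (\<Sum>t<T. S t) + sqnorm (Q *\<^sub>v xs T) + sqnorm ((1/2) \<cdot>\<^sub>v rho T) + g 0"
    unfolding primal_cost_def dual_obj_def S_def g0
    by (simp add: lessThan_Suc_atMost[symmetric] sum.distrib)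
  then show ?thesis using tel trm by linarith
qed
theorem theorem1:
  fixes nx nu mu T p q r :: nat
    and A B F G Q R :: "real mat" and h x0 u0 e0 :: "real vec"
    and vlo vhi lam rho mul nlo nhi sig :: "nat \<Rightarrow> real vec"
  assumes T: "T \<ge> 1"
    and A: "A \<in> carrier_mat nx nx" and B: "B \<in> carrier_mat nx (nu + mu)"
    and F: "F \<in> carrier_mat p nx" and G: "G \<in> carrier_mat p (nu + mu)"
    and h: "h \<in> carrier_vec p"
    and D0: "F *\<^sub>v 0\<^sub>v nx + G *\<^sub>v 0\<^sub>v (nu + mu) \<le> h"
    and Q: "Q \<in> carrier_mat q nx" and R: "R \<in> carrier_mat r (nu + mu)"
    and x0: "x0 \<in> carrier_vec nx"
    and u0: "u0 \<in> carrier_vec (nu + mu)" and u0bin: "\<forall>i<mu. u0 $ (nu + i) \<in> {0, 1}"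
    and x0u0D: "F *\<^sub>v x0 + G *\<^sub>v u0 \<le> h"
    and e0: "e0 \<in> carrier_vec nx"
    and V0: "is_interval mu T vlo vhi"
    and v0in: "vlo 0 \<le> sel_mat nu mu *\<^sub>v u0 \<and> sel_mat nu mu *\<^sub>v u0 \<le> vhi 0"
    and dfeas: "dual_feasible A B F G (sel_mat nu mu) Q R T lam rho mul nlo nhi sig"
  shows
    "let V = sel_mat nu mu; v0 = V *\<^sub>v u0;
         x1 = A *\<^sub>v x0 + B *\<^sub>v u0 + e0;
         vlo1 = (\<lambda>t. if t + 1 < T then vlo (t + 1) else 0\<^sub>v mu);
         vhi1 = (\<lambda>t. if t + 1 < T then vhi (t + 1) else vec mu (\<lambda>_. 1));
         \<theta>0 = dual_obj h T vlo vhi x0 lam rho mul nlo nhi sig;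
         \<pi>1 = - sqnorm (Q *\<^sub>v x0) - sqnorm (R *\<^sub>v u0);
         \<pi>2 = sqnorm ((1/2) \<cdot>\<^sub>v rho 0 - Q *\<^sub>v x0) + sqnorm ((1/2) \<cdot>\<^sub>v sig 0 - R *\<^sub>v u0);
         \<pi>3 = (h - F *\<^sub>v x0 - G *\<^sub>v u0) \<bullet> mul 0 + (v0 - vlo 0) \<bullet> nlo 0
               + (vhi 0 - v0) \<bullet> nhi 0;
         \<pi>4 = - (e0 \<bullet> lam 1)
     in ereal (\<theta>0 + \<pi>1 + \<pi>2 + \<pi>3 + \<pi>4) \<le> theta A B F G h V Q R T vlo1 vhi1 x1"
proof -
  define V where "V = sel_mat nu mu"
  have Vc: "V \<in> carrier_mat mu (nu + mu)" unfolding V_def sel_mat_def by simp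
  define x1 where "x1 = A *\<^sub>v x0 + B *\<^sub>v u0 + e0"
  define vlo1 where "vlo1 = (\<lambda>t. if t + 1 < T then vlo (t + 1) else 0\<^sub>v mu)"
  define vhi1 where "vhi1 = (\<lambda>t. if t + 1 < T then vhi (t + 1) else vec mu (\<lambda>_. 1::real))"
  define lam1 where "lam1 = (\<lambda>t. if t < T then lam (t + 1) else 0\<^sub>v nx)"
  define rho1 where "rho1 = (\<lambda>t. if t < T then rho (t + 1) else 0\<^sub>v q)"
  define mu1 where "mu1 = (\<lambda>t. if t + 1 < T then mul (t + 1) else 0\<^sub>v p)"
  define nlo1 where "nlo1 = (\<lambda>t. if t + 1 < T then nlo (t + 1) else 0\<^sub>v mu)"
  define nhi1 where "nhi1 = (\<lambda>t. if t + 1 < T then nhi (t + 1) else 0\<^sub>v mu)"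
  define sig1 where "sig1 = (\<lambda>t. if t + 1 < T then sig (t + 1) else 0\<^sub>v r)"
  from A B F G Q R Vc have dims: "dim_col A = nx" "dim_col B = nu + mu" "dim_row F = p" "dim_row V = mu"
    "dim_row Q = q" "dim_row R = r" by auto
  note df' = dfeas[folded V_def, unfolded dual_feasible_def dims]
  have df1: "dual_feasible A B F G V Q R T lam1 rho1 mu1 nlo1 nhi1 sig1"
    unfolding dual_feasible_def dims
  proof (intro conjI allI impI)
    fix t assume "t \<le> T"
    then show "lam1 t \<in> carrier_vec nx" "rho1 t \<in> carrier_vec q"
      unfolding lam1_def rho1_def using df' by auto
  next
    fix t assume "t < T"
    then show "mu1 t \<in> carrier_vec p" "nlo1 t \<in> carrier_vec mu" "nhi1 t \<in> carrier_vec mu"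
      "sig1 t \<in> carrier_vec r"
      unfolding mu1_def nlo1_def nhi1_def sig1_def using df' by auto
  next
    fix t assume t: "t < T"
    show "transpose_mat Q *\<^sub>v rho1 t + lam1 t - transpose_mat A *\<^sub>v lam1 (t + 1)
             + transpose_mat F *\<^sub>v mu1 t = 0\<^sub>v nx"
    proof (cases "t + 1 < T")
      case True
      then show ?thesis unfolding rho1_def lam1_def mu1_def using df' t by auto
    next
      case False
      then have tT: "t + 1 = T" using t by simp
      have "transpose_mat A *\<^sub>v 0\<^sub>v nx = 0\<^sub>v nx" using A by simp
      moreover have "transpose_mat F *\<^sub>v 0\<^sub>v p = 0\<^sub>v nx" using F by simp
      moreover have "transpose_mat Q *\<^sub>v rho T + lam T \<in> carrier_vec nx" using df' Q by auto
      ultimately show ?thesis unfolding rho1_def lam1_def mu1_def using df' t tT False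
        by (simp del: One_nat_def)
    qed
  next
    show "transpose_mat Q *\<^sub>v rho1 T + lam1 T = 0\<^sub>v nx"
      unfolding rho1_def lam1_def using Q by simp
  next
    fix t assume t: "t < T"
    show "transpose_mat R *\<^sub>v sig1 t - transpose_mat B *\<^sub>v lam1 (t + 1) + transpose_mat G *\<^sub>v mu1 t
         + transpose_mat V *\<^sub>v (nhi1 t - nlo1 t) = 0\<^sub>v (nu + mu)"
    proof (cases "t + 1 < T")
      case True
      then show ?thesis unfolding sig1_def nhi1_def nlo1_def lam1_def mu1_def using df' t by auto
    next
      case False
      then show ?thesis unfolding sig1_def nhi1_def nlo1_def lam1_def mu1_def
        using R B G Vc by simp
    qed
  next
    fix t assume "t < T"
    then show "0\<^sub>v p \<le> mu1 t" "0\<^sub>v mu \<le> nlo1 t" "0\<^sub>v mu \<le> nhi1 t"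
      unfolding mu1_def nlo1_def nhi1_def using df' by auto
  qed
  have wd: "ereal (dual_obj h T vlo1 vhi1 x1 lam1 rho1 mu1 nlo1 nhi1 sig1)
     \<le> theta A B F G h V Q R T vlo1 vhi1 x1"
    unfolding theta_def
    by (rule Inf_greatest) (auto intro: weak_duality[OF A B F G Q R Vc h df1])
  obtain T' where T': "T = Suc T'" using T by (cases T) auto
  have s1: "(\<Sum>t\<le>T. sqnorm ((1/2) \<cdot>\<^sub>v rho1 t)) = (\<Sum>t\<le>T. sqnorm ((1/2) \<cdot>\<^sub>v rho t)) - sqnorm ((1/2) \<cdot>\<^sub>v rho 0)"
  proof -
    have "(\<Sum>t\<le>T. sqnorm ((1/2) \<cdot>\<^sub>v rho1 t)) = (\<Sum>t<T. sqnorm ((1/2) \<cdot>\<^sub>v rho1 t)) + sqnorm ((1/2) \<cdot>\<^sub>v rho1 T)"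
      by (simp add: lessThan_Suc_atMost[symmetric])
    also have "sqnorm ((1/2) \<cdot>\<^sub>v rho1 T) = 0" unfolding rho1_def sqnorm_def by simp
    also have "(\<Sum>t<T. sqnorm ((1/2) \<cdot>\<^sub>v rho1 t)) = (\<Sum>t<T. sqnorm ((1/2) \<cdot>\<^sub>v rho (Suc t)))"
      unfolding rho1_def by (intro sum.cong) auto
    also have "\<dots> = (\<Sum>t\<le>T. sqnorm ((1/2) \<cdot>\<^sub>v rho t)) - sqnorm ((1/2) \<cdot>\<^sub>v rho 0)"
      unfolding T' sum.atMost_Suc_shift lessThan_Suc_atMost by simp
    finally show ?thesis by simp
  qed
  define gs where "gs t = sqnorm ((1/2) \<cdot>\<^sub>v sig t) + h \<bullet> mul t + vhi t \<bullet> nhi t - vlo t \<bullet> nlo t" for t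
  have s2: "(\<Sum>t<T. sqnorm ((1/2) \<cdot>\<^sub>v sig1 t) + h \<bullet> mu1 t + vhi1 t \<bullet> nhi1 t - vlo1 t \<bullet> nlo1 t)
      = (\<Sum>t<T. gs t) - gs 0"
  proof -
    have "(\<Sum>t<T. sqnorm ((1/2) \<cdot>\<^sub>v sig1 t) + h \<bullet> mu1 t + vhi1 t \<bullet> nhi1 t - vlo1 t \<bullet> nlo1 t)
       = (\<Sum>t<T. if t + 1 < T then gs (Suc t) else 0)"
      unfolding sig1_def mu1_def nhi1_def nlo1_def vhi1_def vlo1_def gs_def
      by (intro sum.cong) (use h in \<open>auto simp: sqnorm_def\<close>)
    also have "\<dots> = (\<Sum>t<T'. gs (Suc t))"
      unfolding T' by (simp add: lessThan_Suc)
    also have "\<dots> = (\<Sum>t<T. gs t) - gs 0"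
      unfolding T' sum.lessThan_Suc_shift by simp
    finally show ?thesis .
  qed
  have l10: "lam1 0 = lam 1" unfolding lam1_def using T by simp
  have dn: "dual_obj h T vlo1 vhi1 x1 lam1 rho1 mu1 nlo1 nhi1 sig1
      = dual_obj h T vlo vhi x0 lam rho mul nlo nhi sig + sqnorm ((1/2) \<cdot>\<^sub>v rho 0) + gs 0
        + x0 \<bullet> lam 0 - x1 \<bullet> lam 1"
    unfolding dual_obj_def s1 s2 l10 gs_def by simp
  have T0: "0 < T" using T by simp
  have x0c: "x0 \<in> carrier_vec nx" and u0c: "u0 \<in> carrier_vec (nu + mu)" using x0 u0 .
  have lam0: "lam 0 \<in> carrier_vec nx" and lam1c: "lam 1 \<in> carrier_vec nx"
    and rho0: "rho 0 \<in> carrier_vec q" and sig0: "sig 0 \<in> carrier_vec r"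
    and mu0: "mul 0 \<in> carrier_vec p" and nlo0: "nlo 0 \<in> carrier_vec mu" and nhi0: "nhi 0 \<in> carrier_vec mu"
    using df' T T0 by auto
  have vlo0: "vlo 0 \<in> carrier_vec mu" and vhi0: "vhi 0 \<in> carrier_vec mu"
    using V0 T0 unfolding is_interval_def by auto
  define v0 where "v0 = V *\<^sub>v u0"
  have v0c: "v0 \<in> carrier_vec mu" unfolding v0_def using Vc u0 by simp
  have Qx: "Q *\<^sub>v x0 \<in> carrier_vec q" and Ru: "R *\<^sub>v u0 \<in> carrier_vec r"
    and Fx: "F *\<^sub>v x0 \<in> carrier_vec p" and Gu: "G *\<^sub>v u0 \<in> carrier_vec p"
    and Ax: "A *\<^sub>v x0 \<in> carrier_vec nx" and Bu: "B *\<^sub>v u0 \<in> carrier_vec nx"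
    using Q R F G A B x0 u0 by auto
  have q1: "sqnorm ((1/2) \<cdot>\<^sub>v rho 0 - Q *\<^sub>v x0) = sqnorm ((1/2) \<cdot>\<^sub>v rho 0) - rho 0 \<bullet> (Q *\<^sub>v x0) + sqnorm (Q *\<^sub>v x0)"
    by (rule sq_expand[OF Qx rho0])
  have q2: "sqnorm ((1/2) \<cdot>\<^sub>v sig 0 - R *\<^sub>v u0) = sqnorm ((1/2) \<cdot>\<^sub>v sig 0) - sig 0 \<bullet> (R *\<^sub>v u0) + sqnorm (R *\<^sub>v u0)"
    by (rule sq_expand[OF Ru sig0])
  have si: "rho 0 \<bullet> (Q *\<^sub>v x0) + sig 0 \<bullet> (R *\<^sub>v u0) + mul 0 \<bullet> (F *\<^sub>v x0 + G *\<^sub>v u0)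
         + (nhi 0 - nlo 0) \<bullet> (V *\<^sub>v u0) = (A *\<^sub>v x0 + B *\<^sub>v u0) \<bullet> lam (0+1) - x0 \<bullet> lam 0"
    by (rule stage_identity[OF A B F G Q R Vc x0 u0 lam0 _ rho0 sig0 mu0 nlo0 nhi0])
      (use df' T0 lam1c in auto)
  have a1: "x1 \<bullet> lam 1 = (A *\<^sub>v x0 + B *\<^sub>v u0) \<bullet> lam 1 + e0 \<bullet> lam 1"
    unfolding x1_def by (rule add_scalar_prod_distrib[of _ nx]) (use Ax Bu e0 lam1c in auto)
  have a2: "(h - F *\<^sub>v x0 - G *\<^sub>v u0) \<bullet> mul 0 = h \<bullet> mul 0 - (F *\<^sub>v x0) \<bullet> mul 0 - (G *\<^sub>v u0) \<bullet> mul 0"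
    using minus_scalar_prod_distrib[of "h - F *\<^sub>v x0" p "G *\<^sub>v u0" "mul 0"]
      minus_scalar_prod_distrib[OF h Fx mu0] h Fx Gu mu0 by simp
  have a3: "mul 0 \<bullet> (F *\<^sub>v x0 + G *\<^sub>v u0) = (F *\<^sub>v x0) \<bullet> mul 0 + (G *\<^sub>v u0) \<bullet> mul 0"
    using scalar_prod_add_distrib[OF mu0 Fx Gu] comm_scalar_prod[OF mu0 Fx] comm_scalar_prod[OF mu0 Gu] by simp
  have a4: "(v0 - vlo 0) \<bullet> nlo 0 = v0 \<bullet> nlo 0 - vlo 0 \<bullet> nlo 0"
    by (rule minus_scalar_prod_distrib[OF v0c vlo0 nlo0])
  have a5: "(vhi 0 - v0) \<bullet> nhi 0 = vhi 0 \<bullet> nhi 0 - v0 \<bullet> nhi 0"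
    by (rule minus_scalar_prod_distrib[OF vhi0 v0c nhi0])
  have a6: "(nhi 0 - nlo 0) \<bullet> v0 = v0 \<bullet> nhi 0 - v0 \<bullet> nlo 0"
    using minus_scalar_prod_distrib[OF nhi0 nlo0 v0c] comm_scalar_prod[OF nhi0 v0c] comm_scalar_prod[OF nlo0 v0c] by simp
  have fin: "dual_obj h T vlo vhi x0 lam rho mul nlo nhi sig
      + (- sqnorm (Q *\<^sub>v x0) - sqnorm (R *\<^sub>v u0))
      + (sqnorm ((1/2) \<cdot>\<^sub>v rho 0 - Q *\<^sub>v x0) + sqnorm ((1/2) \<cdot>\<^sub>v sig 0 - R *\<^sub>v u0))
      + ((h - F *\<^sub>v x0 - G *\<^sub>v u0) \<bullet> mul 0 + (v0 - vlo 0) \<bullet> nlo 0 + (vhi 0 - v0) \<bullet> nhi 0)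
      + (- (e0 \<bullet> lam 1)) = dual_obj h T vlo1 vhi1 x1 lam1 rho1 mu1 nlo1 nhi1 sig1"
    unfolding dn gs_def using q1 q2 si a1 a2 a3 a4 a5 a6 unfolding v0_def[symmetric] by simp
  show ?thesis unfolding Let_def V_def[symmetric] v0_def[symmetric] x1_def[symmetric]
      vlo1_def[symmetric] vhi1_def[symmetric] fin using wd by simp
qed

end
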